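(* Let $f=Mh\in\mathbb C[U_1,\ldots,U_n]$, where $M$ is a monomial $U_1^{\alpha_1}\cdots U_n^{\alpha_n}$ and $h\in\mathbb C[U_1,\ldots,U_n]$ has nonzero constant term. Then there exists $m\ge1$ with $\mathcal L(f^m)\neq0$. (Equivalently: if $f$ is of this form with $\mathcal L(f^m)=0$ for all $m\ge 1$, then $f=0$, which is impossible; so no such $f$ exists.)
   Context: $\mathcal L:\mathbb C[U_1,\ldots,U_n]\to\mathbb C$ is the $\mathbb C$-linear map defined on monomials by $\mathcal L(U_1^{\ell_1}\cdots U_n^{\ell_n})=\ell_1!\cdots\ell_n!$. *)

theory Defs
  imports Complex_Main "HOL-Library.Poly_Mapping"
begin

text \<open>Polynomials in C[U_1,...,U_n]: finitely supported maps from exponent vectors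
  (nat \<Rightarrow>0 nat, variable U_(i+1) indexed by i < n) to complex coefficients.\<close>

type_synonym mpoly = "(nat \<Rightarrow>\<^sub>0 nat) \<Rightarrow>\<^sub>0 complex"

definition in_vars :: "nat \<Rightarrow> mpoly \<Rightarrow> bool" where
  "in_vars n p \<longleftrightarrow> (\<forall>a\<in>Poly_Mapping.keys p. Poly_Mapping.keys a \<subseteq> {..<n})"

definition monomial :: "(nat \<Rightarrow>\<^sub>0 nat) \<Rightarrow> mpoly" where
  "monomial a = Poly_Mapping.single a 1"

definition LL :: "nat \<Rightarrow> mpoly \<Rightarrow> complex" where
  "LL n p = (\<Sum>a\<in>Poly_Mapping.keys p. Poly_Mapping.lookup p a * of_nat (\<Prod>i<n. fact (Poly_Mapping.lookup a i)))"

end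

theory Submission
  imports Defs "HOL-Computational_Algebra.Polynomial" "HOL-Computational_Algebra.Primes"
begin

inductive_set zring :: "complex set \<Rightarrow> complex set" for S where
  zr_int: "of_int k \<in> zring S"
| zr_gen: "x \<in> S \<Longrightarrow> x \<in> zring S"
| zr_add: "x \<in> zring S \<Longrightarrow> y \<in> zring S \<Longrightarrow> x + y \<in> zring S"
| zr_mult: "x \<in> zring S \<Longrightarrow> y \<in> zring S \<Longrightarrow> x * y \<in> zring S"

lemma zr_0: "0 \<in> zring S" using zr_int[of 0] by simp
lemma zr_1: "1 \<in> zring S" using zr_int[of 1] by simp
lemma zr_nat: "of_nat k \<in> zring S" using zr_int[of "int k"] by simp
lemma zr_minus: "x \<in> zring S \<Longrightarrow> - x \<in> zring S"
  using zr_mult[OF zr_int[of "-1"]] by simp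
lemma zr_diff: assumes "x \<in> zring S" "y \<in> zring S" shows "x - y \<in> zring S"
proof -
  have "x + (- y) \<in> zring S" using assms by (intro zring.zr_add zr_minus)
  then show ?thesis by simp
qed
lemma zr_pow: "x \<in> zring S \<Longrightarrow> x ^ n \<in> zring S"
  by (induction n) (auto intro: zr_1 zr_mult)
lemma zr_sum: "(\<And>i. i \<in> A \<Longrightarrow> f i \<in> zring S) \<Longrightarrow> sum f A \<in> zring S"
  by (induction A rule: infinite_finite_induct) (auto intro: zr_0 zr_add)
lemma zr_prod: "(\<And>i. i \<in> A \<Longrightarrow> f i \<in> zring S) \<Longrightarrow> prod f A \<in> zring S"
  by (induction A rule: infinite_finite_induct) (auto intro: zr_1 zr_mult)
lemma zr_sub: assumes "S \<subseteq> zring T" shows "zring S \<subseteq> zring T"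
proof
  fix x assume "x \<in> zring S" then show "x \<in> zring T"
    by induction (use assms in \<open>auto intro: zr_int zr_add zr_mult\<close>)
qed
lemma zr_mono: "S \<subseteq> T \<Longrightarrow> zring S \<subseteq> zring T"
  by (rule zr_sub) (auto intro: zr_gen)

lemma zring_empty: "x \<in> zring {} \<Longrightarrow> x \<in> \<int>"
  by (induction rule: zring.induct) auto

definition pover :: "complex set \<Rightarrow> complex poly \<Rightarrow> bool" where
  "pover R P \<longleftrightarrow> (\<forall>i. coeff P i \<in> R)"

lemma pover_add: "pover (zring S) P \<Longrightarrow> pover (zring S) Q \<Longrightarrow> pover (zring S) (P + Q)"
  unfolding pover_def by (simp add: zr_add)
lemma pover_minus: "pover (zring S) P \<Longrightarrow> pover (zring S) (- P)"
  unfolding pover_def by (simp add: zr_minus)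
lemma pover_diff: "pover (zring S) P \<Longrightarrow> pover (zring S) Q \<Longrightarrow> pover (zring S) (P - Q)"
  unfolding pover_def by (simp add: zr_diff)
lemma pover_mult: "pover (zring S) P \<Longrightarrow> pover (zring S) Q \<Longrightarrow> pover (zring S) (P * Q)"
  unfolding pover_def coeff_mult by (auto intro!: zr_sum zr_mult)
lemma pover_const: "c \<in> zring S \<Longrightarrow> pover (zring S) [:c:]"
  by (auto simp: pover_def coeff_pCons split: nat.splits intro: zr_0)
lemma pover_smult: "c \<in> zring S \<Longrightarrow> pover (zring S) P \<Longrightarrow> pover (zring S) (smult c P)"
  unfolding pover_def by (simp add: zr_mult)
lemma pover_pow: "pover (zring S) P \<Longrightarrow> pover (zring S) (P ^ n)"
  by (induction n) (auto intro: pover_mult pover_const[OF zr_1] simp: one_pCons)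
lemma pover_monom: "c \<in> zring S \<Longrightarrow> pover (zring S) (monom c n)"
  by (auto simp: pover_def coeff_monom intro: zr_0)
lemma pover_x: "pover (zring S) [:0,1:]"
  by (auto simp: pover_def coeff_pCons split: nat.splits intro: zr_0 zr_1)

lemma zring_insert_poly:
  assumes "x \<in> zring (insert a S0)"
  shows "\<exists>P. pover (zring S0) P \<and> x = poly P a"
  using assms
proof induction
  case (zr_int k) then show ?case by (intro exI[of _ "[:of_int k:]"]) (auto intro: pover_const zring.zr_int)
next
  case (zr_gen x) then show ?case
  proof
    assume "x = a" then show ?thesis by (intro exI[of _ "[:0,1:]"]) (auto intro: pover_x)
  next
    assume "x \<in> S0" then show ?thesis by (intro exI[of _ "[:x:]"]) (auto intro: pover_const zring.zr_gen)
  qed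
next
  case (zr_add x y)
  obtain P where P: "pover (zring S0) P" "x = poly P a" using zr_add.IH(1) by blast
  obtain Q where Q: "pover (zring S0) Q" "y = poly Q a" using zr_add.IH(2) by blast
  have "pover (zring S0) (P + Q)" using P(1) Q(1) by (rule pover_add)
  moreover have "x + y = poly (P + Q) a" using P(2) Q(2) by simp
  ultimately show ?case by blast
next
  case (zr_mult x y)
  obtain P where P: "pover (zring S0) P" "x = poly P a" using zr_mult.IH(1) by blast
  obtain Q where Q: "pover (zring S0) Q" "y = poly Q a" using zr_mult.IH(2) by blast
  have "pover (zring S0) (P * Q)" using P(1) Q(1) by (rule pover_mult)
  moreover have "x * y = poly (P * Q) a" using P(2) Q(2) by simp
  ultimately show ?case by blast
qed

lemma zring_insert_inv:
  assumes "d \<in> zring T" "d \<noteq> 0" "x \<in> zring (insert (1/d) T)"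
  shows "\<exists>y j. y \<in> zring T \<and> x = y / d ^ j"
  using assms(3)
proof induction
  case (zr_int k) then show ?case by (intro exI[of _ "of_int k"] exI[of _ 0]) (auto intro: zring.zr_int)
next
  case (zr_gen x) then show ?case
  proof
    assume "x = 1/d" then show ?thesis by (intro exI[of _ 1] exI[of _ 1]) (auto intro: zr_1)
  next
    assume "x \<in> T" then show ?thesis by (intro exI[of _ x] exI[of _ 0]) (auto intro: zring.zr_gen)
  qed
next
  case (zr_add x y)
  obtain u i where uv1: "u \<in> zring T" "x = u / d^i" using zr_add.IH(1) by blast
  obtain v j where uv2: "v \<in> zring T" "y = v / d^j" using zr_add.IH(2) by blast
  note uv = uv1 uv2
  have e: "u/d^i + v/d^j = (u * d^j + v * d^i) / d^(i+j)" using assms(2) by (simp add: power_add add_divide_distrib)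
  have "x + y = (u * d^j + v * d^i) / d^(i+j)" by (simp only: uv(2,4) e)
  moreover have "u * d^j + v * d^i \<in> zring T" using uv assms(1) by (intro zring.zr_add zring.zr_mult zr_pow)
  ultimately show ?case by (intro exI[of _ "u * d^j + v * d^i"] exI[of _ "i+j"] conjI)
next
  case (zr_mult x y)
  obtain u i where uv1: "u \<in> zring T" "x = u / d^i" using zr_mult.IH(1) by blast
  obtain v j where uv2: "v \<in> zring T" "y = v / d^j" using zr_mult.IH(2) by blast
  note uv = uv1 uv2
  have e: "(u/d^i) * (v/d^j) = (u * v) / d^(i+j)" using assms(2) by (simp add: power_add)
  have "x * y = (u * v) / d^(i+j)" by (simp only: uv(2,4) e)
  moreover have "u * v \<in> zring T" using uv assms(1) by (intro zring.zr_mult)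
  ultimately show ?case by (intro exI[of _ "u * v"] exI[of _ "i+j"] conjI)
qed

lemma pdiv_step_degree:
  fixes A B :: "complex poly"
  assumes "B \<noteq> 0" "A \<noteq> 0" "degree B \<le> degree A"
    "A' = smult (lead_coeff B) A - monom (lead_coeff A) (degree A - degree B) * B"
  shows "A' = 0 \<or> degree A' < degree A"
proof -
  have d1: "degree (smult (lead_coeff B) A) \<le> degree A" by (rule degree_smult_le)
  have "degree (monom (lead_coeff A) (degree A - degree B) * B) \<le> (degree A - degree B) + degree B"
    using degree_mult_le[of "monom (lead_coeff A) (degree A - degree B)" B] degree_monom_le[of "lead_coeff A" "degree A - degree B"]
    by linarith
  then have d2: "degree (monom (lead_coeff A) (degree A - degree B) * B) \<le> degree A" using assms(3) by linarith
  have le: "degree A' \<le> degree A" unfolding assms(4) by (rule degree_diff_le[OF d1 d2])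
  have c: "coeff A' (degree A) = 0" unfolding assms(4) using assms(3)
    by (simp add: coeff_monom_mult)
  show ?thesis
  proof (cases "A' = 0")
    case False
    then have "coeff A' (degree A') \<noteq> 0" by simp
    then show ?thesis using le c by (metis le_neq_implies_less)
  qed simp
qed

lemma pdiv:
  assumes "pover (zring S) A" "pover (zring S) B" "B \<noteq> 0"
  shows "\<exists>j q r. pover (zring S) q \<and> pover (zring S) r \<and>
     smult (lead_coeff B ^ j) A = q * B + r \<and> (r = 0 \<or> degree r < degree B)"
  using assms(1)
proof (induction "degree A" arbitrary: A rule: less_induct)
  case less
  show ?case
  proof (cases "A = 0 \<or> degree A < degree B")
    case True
    then show ?thesis using less.prems
      by (intro exI[of _ 0] exI[of _ 0] exI[of _ A]) (auto simp: pover_def intro: zr_0)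
  next
    case False
    then have nz: "A \<noteq> 0" and dle: "degree B \<le> degree A" by auto
    define M where "M = monom (lead_coeff A) (degree A - degree B)"
    define A' where "A' = smult (lead_coeff B) A - M * B"
    have pM: "pover (zring S) M" unfolding M_def
      using less.prems by (intro pover_monom) (simp add: pover_def)
    have lcB: "lead_coeff B \<in> zring S" using assms(2) by (simp add: pover_def)
    have pA': "pover (zring S) A'" unfolding A'_def
      by (intro pover_diff pover_smult pover_mult lcB less.prems pM assms(2))
    have "A' = 0 \<or> degree A' < degree A"
      using pdiv_step_degree[OF assms(3) nz dle] A'_def M_def by blast
    then show ?thesis
    proof
      assume "A' = 0"
      then have eq: "smult (lead_coeff B ^ 1) A = M * B + 0" by (simp add: A'_def)
      have p0: "pover (zring S) 0" by (simp add: pover_def zr_0)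
      show ?thesis
        apply (rule exI[of _ 1], rule exI[of _ M], rule exI[of _ 0])
        using eq pM p0 by simp
    next
      assume "degree A' < degree A"
      from less.hyps[OF this pA'] obtain j q r where
        h: "pover (zring S) q" "pover (zring S) r" "smult (lead_coeff B ^ j) A' = q * B + r"
           "r = 0 \<or> degree r < degree B" by blast
      have "smult (lead_coeff B ^ Suc j) A = smult (lead_coeff B ^ j) (A' + M * B)"
        by (simp add: A'_def mult.commute)
      also have "\<dots> = (q + smult (lead_coeff B ^ j) M) * B + r"
        using h(3) by (simp add: smult_add_right algebra_simps)
      finally have eq: "smult (lead_coeff B ^ Suc j) A = (q + smult (lead_coeff B ^ j) M) * B + r" .
      have pq: "pover (zring S) (q + smult (lead_coeff B ^ j) M)"
        by (intro pover_add pover_smult zr_pow lcB pM h(1))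
      show ?thesis
        apply (rule exI[of _ "Suc j"], rule exI[of _ "q + smult (lead_coeff B ^ j) M"], rule exI[of _ r])
        using eq pq h(2,4) by simp
    qed
  qed
qed

lemma pover_one: "pover (zring S) 1"
  using pover_const[OF zr_1, of S] by (simp add: one_pCons)
lemma pover_zero: "pover (zring S) 0"
  by (simp add: pover_def zr_0)

lemma alg_inv_small:
  assumes pQ: "pover (zring S0) Q" and Qnz: "Q \<noteq> 0" and Qa: "poly Q a = 0"
    and minQ: "\<And>P. pover (zring S0) P \<Longrightarrow> poly P a = 0 \<Longrightarrow> degree P < degree Q \<Longrightarrow> P = 0"
  shows "pover (zring S0) D \<Longrightarrow> poly D a \<noteq> 0 \<Longrightarrow> degree D < degree Q \<Longrightarrow>
    \<exists>U E. pover (zring S0) U \<and> E \<in> zring S0 \<and> E \<noteq> 0 \<and> poly D a * poly U a = E"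
proof (induction "degree D" arbitrary: D rule: less_induct)
  case less
  show ?case
  proof (cases "degree D = 0")
    case True
    then have "D = [:coeff D 0:]" by (metis degree_0_id)
    then have "poly D a = coeff D 0" by (metis poly_pCons mult_zero_right poly_0 add.right_neutral)
    moreover have "coeff D 0 \<in> zring S0" using less.prems(1) by (simp add: pover_def)
    ultimately show ?thesis using less.prems(2) pover_one[of S0]
      by (intro exI[of _ 1] exI[of _ "coeff D 0"]) simp
  next
    case False
    have Dnz: "D \<noteq> 0" using less.prems(2) by auto
    obtain j q r where h: "pover (zring S0) q" "pover (zring S0) r"
      "smult (lead_coeff D ^ j) Q = q * D + r" "r = 0 \<or> degree r < degree D"
      using pdiv[OF pQ less.prems(1) Dnz] by blast
    have ev: "0 = poly q a * poly D a + poly r a"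
      using arg_cong[OF h(3), of "\<lambda>P. poly P a"] Qa by simp
    have lnz: "lead_coeff D ^ j \<noteq> 0" using Dnz by simp
    show ?thesis
    proof (cases "r = 0")
      case True
      then have qa: "poly q a = 0" using ev less.prems(2) by simp
      have eq: "smult (lead_coeff D ^ j) Q = q * D" using h(3) True by simp
      have "smult (lead_coeff D ^ j) Q \<noteq> 0" using lnz Qnz by simp
      then have qnz: "q \<noteq> 0" using eq by auto
      have "degree Q = degree (q * D)" using eq lnz by (metis degree_smult_eq)
      also have "\<dots> = degree q + degree D" using qnz Dnz by (rule degree_mult_eq)
      finally have "degree q < degree Q" using False by simp
      then have "q = 0" using minQ[OF h(1) qa] by simp
      then show ?thesis using qnz by simp
    next
      case False
      then have dr: "degree r < degree D" using h(4) by simp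
      have ra: "poly r a \<noteq> 0"
      proof
        assume "poly r a = 0"
        then have "r = 0" using minQ[OF h(2)] dr less.prems(3) by simp
        then show False using False by simp
      qed
      obtain U E where UE: "pover (zring S0) U" "E \<in> zring S0" "E \<noteq> 0" "poly r a * poly U a = E"
        using less.hyps[OF dr h(2) ra] dr less.prems(3) by force
      have e2: "poly q a * poly D a = - poly r a" using ev by (simp add: eq_neg_iff_add_eq_0)
      have "poly D a * poly (- (q * U)) a = - (poly q a * poly D a) * poly U a"
        by (simp add: algebra_simps)
      also have "\<dots> = E" using e2 UE(4) by simp
      finally have "poly D a * poly (- (q * U)) a = E" .
      moreover have "pover (zring S0) (- (q * U))" by (intro pover_minus pover_mult h(1) UE(1))
      ultimately show ?thesis using UE(2,3) by blast
    qed
  qed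
qed

lemma alg_inv:
  assumes pQ: "pover (zring S0) Q" and Qnz: "Q \<noteq> 0" and Qa: "poly Q a = 0"
    and minQ: "\<And>P. pover (zring S0) P \<Longrightarrow> poly P a = 0 \<Longrightarrow> degree P < degree Q \<Longrightarrow> P = 0"
    and pD: "pover (zring S0) D" and Da: "poly D a \<noteq> 0"
  shows "\<exists>U E. pover (zring S0) U \<and> E \<in> zring S0 \<and> E \<noteq> 0 \<and> poly D a * poly U a = E"
proof -
  obtain j q r where h: "pover (zring S0) q" "pover (zring S0) r"
      "smult (lead_coeff Q ^ j) D = q * Q + r" "r = 0 \<or> degree r < degree Q"
    using pdiv[OF pD pQ Qnz] by blast
  have ev: "lead_coeff Q ^ j * poly D a = poly r a"
    using arg_cong[OF h(3), of "\<lambda>P. poly P a"] Qa by simp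
  have lnz: "lead_coeff Q ^ j \<noteq> 0" using Qnz by simp
  have ra: "poly r a \<noteq> 0" unfolding ev[symmetric] using lnz Da by (rule no_zero_divisors)
  then have "r \<noteq> 0" by auto
  then have dr: "degree r < degree Q" using h(4) by simp
  obtain U E where UE: "pover (zring S0) U" "E \<in> zring S0" "E \<noteq> 0" "poly r a * poly U a = E"
    using alg_inv_small[OF pQ Qnz Qa minQ h(2) ra dr] by blast
  have lc: "lead_coeff Q \<in> zring S0" using pQ by (simp add: pover_def)
  have "poly D a * poly (smult (lead_coeff Q ^ j) U) a = (lead_coeff Q ^ j * poly D a) * poly U a"
    by (simp add: algebra_simps)
  also have "\<dots> = E" using UE(4) ev by simp
  finally have "poly D a * poly (smult (lead_coeff Q ^ j) U) a = E" .
  moreover have "pover (zring S0) (smult (lead_coeff Q ^ j) U)" by (intro pover_smult zr_pow lc UE(1))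
  ultimately show ?thesis using UE(2,3) by blast
qed

lemma min_poly:
  assumes "\<exists>Q. pover R Q \<and> Q \<noteq> 0 \<and> poly Q a = 0"
  obtains Q where "pover R Q" "Q \<noteq> 0" "poly Q a = 0"
    "\<And>P. pover R P \<Longrightarrow> poly P a = 0 \<Longrightarrow> degree P < degree Q \<Longrightarrow> P = 0"
proof -
  define k where "k = (LEAST k. \<exists>Q. pover R Q \<and> Q \<noteq> 0 \<and> poly Q a = 0 \<and> degree Q = k)"
  have ex: "\<exists>k Q. pover R Q \<and> Q \<noteq> 0 \<and> poly Q a = 0 \<and> degree Q = k" using assms by blast
  have "\<exists>Q. pover R Q \<and> Q \<noteq> 0 \<and> poly Q a = 0 \<and> degree Q = k"
    unfolding k_def using ex by (rule LeastI_ex)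
  then obtain Q where Q: "pover R Q" "Q \<noteq> 0" "poly Q a = 0" "degree Q = k" by blast
  show ?thesis
  proof (rule that[OF Q(1-3)])
    fix P assume P: "pover R P" "poly P a = 0" "degree P < degree Q"
    show "P = 0"
    proof (rule ccontr)
      assume "P \<noteq> 0"
      then have "k \<le> degree P" unfolding k_def using P by (intro Least_le) blast
      then show False using P(3) Q(4) by simp
    qed
  qed
qed

lemma of_nat_prime_nz: "prime (p::nat) \<Longrightarrow> (of_nat p :: complex) \<noteq> 0"
  using prime_gt_0_nat by auto

lemma lemA:
  "finite S \<Longrightarrow> \<forall>d. d \<in> zring S \<longrightarrow> d \<noteq> 0 \<longrightarrow> (\<exists>p. prime p \<and> 1 / of_nat p \<notin> zring (insert (1/d) S))"
proof (induction S rule: finite_induct)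
  case empty
  show ?case
  proof (intro allI impI)
    fix d :: complex assume d: "d \<in> zring {}" "d \<noteq> 0"
    then obtain z where z: "d = of_int z" using zring_empty Ints_cases by blast
    then have znz: "z \<noteq> 0" using d(2) by auto
    obtain p where p: "prime p" "nat \<bar>z\<bar> < p" using bigger_prime by blast
    have "1 / of_nat p \<notin> zring (insert (1/d) {})"
    proof
      assume "1 / of_nat p \<in> zring (insert (1/d) {})"
      then obtain y j where yj: "y \<in> zring {}" "1 / of_nat p = y / d ^ j"
        using zring_insert_inv[OF d] by blast
      obtain w where w: "y = of_int w" using yj(1) zring_empty Ints_cases by blast
      have "d ^ j = of_nat p * y" using yj(2) d(2) of_nat_prime_nz[OF p(1)]
        by (simp add: field_simps)
      then have "(of_int (z ^ j) :: complex) = of_int (int p * w)" using z w by simp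
      then have zw: "z ^ j = int p * w" by (simp only: of_int_eq_iff)
      have dv: "int p dvd z ^ j" unfolding zw by (rule dvd_triv_left)
      have pi: "prime (int p)" using p(1) by simp
      have "int p dvd z" using dv by (rule prime_dvd_power[OF pi])
      then have "\<bar>int p\<bar> \<le> \<bar>z\<bar>" using znz by (intro dvd_imp_le_int)
      then show False using p(2) by simp
    qed
    then show "\<exists>p. prime p \<and> 1 / of_nat p \<notin> zring (insert (1/d) {})" using p(1) by blast
  qed
next
  case (insert a S0)
  show ?case
  proof (intro allI impI)
    fix d assume d: "d \<in> zring (insert a S0)" "d \<noteq> 0"
    obtain D where D: "pover (zring S0) D" "d = poly D a" using zring_insert_poly[OF d(1)] by blast
    show "\<exists>p. prime p \<and> 1 / of_nat p \<notin> zring (insert (1/d) (insert a S0))"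
    proof (cases "\<exists>Q. pover (zring S0) Q \<and> Q \<noteq> 0 \<and> poly Q a = 0")
      case False
      then have trans: "\<And>P. pover (zring S0) P \<Longrightarrow> poly P a = 0 \<Longrightarrow> P = 0" by blast
      have Dnz: "D \<noteq> 0" using D d(2) by auto
      define l where "l = lead_coeff D"
      have l: "l \<in> zring S0" "l \<noteq> 0" using D(1) Dnz by (simp_all add: l_def pover_def)
      obtain p where p: "prime p" "1 / of_nat p \<notin> zring (insert (1/l) S0)"
        using insert.IH l by blast
      have "1 / of_nat p \<notin> zring (insert (1/d) (insert a S0))"
      proof
        assume "1 / of_nat p \<in> zring (insert (1/d) (insert a S0))"
        then obtain y j where yj: "y \<in> zring (insert a S0)" "1 / of_nat p = y / d ^ j"
          using zring_insert_inv[OF d] by blast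
        obtain P where P: "pover (zring S0) P" "y = poly P a" using zring_insert_poly[OF yj(1)] by blast
        have pnz: "(of_nat p :: complex) \<noteq> 0" using of_nat_prime_nz[OF p(1)] .
        have "d ^ j = of_nat p * y" using yj(2) d(2) pnz by (simp add: field_simps)
        then have "poly (D ^ j - smult (of_nat p) P) a = 0" using D(2) P(2) by simp
        moreover have "pover (zring S0) (D ^ j - smult (of_nat p) P)"
          by (intro pover_diff pover_pow pover_smult D(1) P(1) zr_nat)
        ultimately have "D ^ j - smult (of_nat p) P = 0" using trans by blast
        then have eq: "D ^ j = smult (of_nat p) P" by simp
        have "l ^ j = coeff (D ^ j) (degree (D ^ j))" by (simp add: l_def lead_coeff_power)
        also have "\<dots> = of_nat p * coeff P (degree (D ^ j))" using eq by simp
        finally have lj: "l ^ j = of_nat p * coeff P (degree (D ^ j))" .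
        have "l ^ j \<noteq> 0" using l(2) by simp
        then have cnz: "coeff P (degree (D ^ j)) \<noteq> 0" using lj by auto
        have "1 / of_nat p = coeff P (degree (D ^ j)) * (1 / l) ^ j"
          using pnz l(2) cnz lj by (simp add: field_simps)
        moreover have "coeff P (degree (D ^ j)) \<in> zring (insert (1/l) S0)"
          using P(1) zr_mono[of S0 "insert (1/l) S0"] by (auto simp: pover_def)
        moreover have "1 / l \<in> zring (insert (1/l) S0)" by (simp add: zring.zr_gen)
        ultimately have "1 / of_nat p \<in> zring (insert (1/l) S0)"
          by (metis zring.zr_mult zr_pow)
        then show False using p(2) by simp
      qed
      then show ?thesis using p(1) by blast
    next
      case True
      then obtain Q where Q: "pover (zring S0) Q" "Q \<noteq> 0" "poly Q a = 0"
        and minQ: "\<And>P. pover (zring S0) P \<Longrightarrow> poly P a = 0 \<Longrightarrow> degree P < degree Q \<Longrightarrow> P = 0"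
        using min_poly by blast
      have dQ: "degree Q > 0"
      proof (rule ccontr)
        assume "\<not> degree Q > 0"
        then have "Q = [:coeff Q 0:]" by (metis degree_0_id neq0_conv)
        then have "poly Q a = coeff Q 0" by (metis poly_pCons mult_zero_right poly_0 add.right_neutral)
        then show False using Q(2,3) \<open>Q = [:coeff Q 0:]\<close> by auto
      qed
      define e where "e = lead_coeff Q"
      have e: "e \<in> zring S0" "e \<noteq> 0" using Q(1,2) by (simp_all add: e_def pover_def)
      obtain U E where UE: "pover (zring S0) U" "E \<in> zring S0" "E \<noteq> 0" "d * poly U a = E"
        using alg_inv[OF Q minQ D(1)] D(2) d(2) by blast
      have eE: "e * E \<in> zring S0" "e * E \<noteq> 0" using e UE(2,3) by (simp_all add: zring.zr_mult)
      obtain p where p: "prime p" "1 / of_nat p \<notin> zring (insert (1/(e*E)) S0)"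
        using insert.IH eE by blast
      have "1 / of_nat p \<notin> zring (insert (1/d) (insert a S0))"
      proof
        assume "1 / of_nat p \<in> zring (insert (1/d) (insert a S0))"
        then obtain y j where yj: "y \<in> zring (insert a S0)" "1 / of_nat p = y / d ^ j"
          using zring_insert_inv[OF d] by blast
        obtain P where P: "pover (zring S0) P" "y = poly P a" using zring_insert_poly[OF yj(1)] by blast
        have pnz: "(of_nat p :: complex) \<noteq> 0" using of_nat_prime_nz[OF p(1)] .
        define W where "W = P * U ^ j"
        have pW: "pover (zring S0) W" unfolding W_def by (intro pover_mult pover_pow P(1) UE(1))
        have invd: "1 / d = poly U a / E" using UE(4) d(2) UE(3) by (simp add: field_simps)
        have "1 / of_nat p = poly P a * (1 / d) ^ j" using yj(2) P(2) by (simp add: field_simps)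
        also have "\<dots> = poly W a / E ^ j" unfolding invd W_def by (simp add: power_divide)
        finally have pW1: "1 / of_nat p = poly W a / E ^ j" .
        obtain i q r where h: "pover (zring S0) q" "pover (zring S0) r"
          "smult (lead_coeff Q ^ i) W = q * Q + r" "r = 0 \<or> degree r < degree Q"
          using pdiv[OF pW Q(1,2)] by blast
        have ev: "e ^ i * poly W a = poly r a"
          using arg_cong[OF h(3), of "\<lambda>P. poly P a"] Q(3) by (simp add: e_def)
        define c where "c = e ^ i * E ^ j"
        have cnz: "c \<noteq> 0" using e(2) UE(3) by (simp add: c_def)
        have "poly r a / c = (e ^ i * poly W a) / (e ^ i * E ^ j)" using ev by (simp add: c_def)
        also have "\<dots> = poly W a / E ^ j" using e(2) by simp
        finally have "1 / of_nat p = poly r a / c" using pW1 by simp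
        then have "poly (smult (of_nat p) r - [:c:]) a = 0" using pnz cnz by (simp add: field_simps)
        moreover have "pover (zring S0) (smult (of_nat p) r - [:c:])"
          by (intro pover_diff pover_smult pover_const zr_nat h(2))
             (simp add: c_def zring.zr_mult zr_pow e UE(2))
        moreover have "degree (smult (of_nat p) r - [:c:]) < degree Q"
        proof -
          have "degree (smult (of_nat p) r) < degree Q"
            using h(4) dQ degree_smult_le[of "of_nat p" r] by auto
          moreover have "degree [:c:] < degree Q" using dQ by simp
          ultimately show ?thesis using degree_diff_le[of "smult (of_nat p) r" "degree Q - 1" "[:c:]"] by linarith
        qed
        ultimately have "smult (of_nat p) r - [:c:] = 0" using minQ by blast
        then have "coeff (smult (of_nat p) r - [:c:]) 0 = 0" by simp
        then have "of_nat p * coeff r 0 = c" by simp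
        then have "1 / of_nat p = coeff r 0 * (1 / (e * E)) ^ (i + j) * e ^ j * E ^ i"
          using pnz cnz e(2) UE(3) by (simp add: c_def field_simps power_add)
        moreover have "\<dots> \<in> zring (insert (1/(e*E)) S0)"
        proof -
          have sub: "zring S0 \<subseteq> zring (insert (1/(e*E)) S0)" by (rule zr_mono) auto
          have "coeff r 0 \<in> zring (insert (1/(e*E)) S0)" using h(2) sub by (auto simp: pover_def)
          moreover have "1 / (e * E) \<in> zring (insert (1/(e*E)) S0)" by (simp add: zring.zr_gen)
          moreover have "e \<in> zring (insert (1/(e*E)) S0)" "E \<in> zring (insert (1/(e*E)) S0)"
            using e UE(2) sub by auto
          ultimately show ?thesis by (intro zring.zr_mult zr_pow)
        qed
        ultimately show False using p(2) by simp
      qed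
      then show ?thesis using p(1) by blast
    qed
  qed
qed

section \<open>Abstract Frobenius\<close>

lemma frob2:
  fixes x y :: "'a::comm_ring_1"
  assumes P0: "P 0" and P1: "P 1" and Padd: "\<And>a b. P a \<Longrightarrow> P b \<Longrightarrow> P (a + b)"
    and Pmult: "\<And>a b. P a \<Longrightarrow> P b \<Longrightarrow> P (a * b)"
    and Px: "P x" and Py: "P y" and p: "prime p"
  shows "\<exists>z. P z \<and> (x + y) ^ p = x ^ p + y ^ p + of_nat p * z"
proof -
  have Pnat: "P (of_nat m)" for m
    by (induction m) (simp_all add: P0 P1 Padd)
  have Ppow: "P (a ^ m)" if "P a" for a m
    using that by (induction m) (simp_all add: P1 Pmult)
  have Psum: "P (sum g A)" if "\<And>k. k \<in> A \<Longrightarrow> P (g k)" for g and A :: "nat set"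
    using that by (induction A rule: infinite_finite_induct) (simp_all add: P0 Padd)
  have p0: "p > 0" using p prime_gt_0_nat by blast
  define z where "z = (\<Sum>k\<in>{1..<p}. of_nat ((p choose k) div p) * x ^ k * y ^ (p - k))"
  have Pz: "P z" unfolding z_def
    by (rule Psum) (intro Pmult Pnat Ppow Px Py)
  have "(x + y) ^ p = (\<Sum>k\<le>p. of_nat (p choose k) * x ^ k * y ^ (p - k))"
    by (rule binomial_ring)
  also have "{..p} = insert 0 (insert p {1..<p})" using p0 by auto
  also have "(\<Sum>k\<in>insert 0 (insert p {1..<p}). of_nat (p choose k) * x ^ k * y ^ (p - k))
      = y ^ p + (x ^ p + (\<Sum>k\<in>{1..<p}. of_nat (p choose k) * x ^ k * y ^ (p - k)))"
    using p0 by (simp add: sum.insert)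
  also have "(\<Sum>k\<in>{1..<p}. of_nat (p choose k) * x ^ k * y ^ (p - k)) = of_nat p * z"
    unfolding z_def sum_distrib_left
  proof (rule sum.cong[OF refl])
    fix k assume k: "k \<in> {1..<p}"
    have "p dvd (p choose k)" using k p by (intro dvd_choose_prime) auto
    then have "p choose k = p * ((p choose k) div p)" by simp
    then have "(of_nat (p choose k) :: 'a) = of_nat p * of_nat ((p choose k) div p)"
      by (metis of_nat_mult)
    then show "of_nat (p choose k) * x ^ k * y ^ (p - k) =
        of_nat p * (of_nat ((p choose k) div p) * x ^ k * y ^ (p - k))"
      by (simp add: mult.assoc)
  qed
  finally show ?thesis using Pz by (intro exI[of _ z]) (simp add: add_ac)
qed

lemma frob_sum:
  fixes t :: "'b \<Rightarrow> 'a::comm_ring_1"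
  assumes P0: "P 0" and P1: "P 1" and Padd: "\<And>a b. P a \<Longrightarrow> P b \<Longrightarrow> P (a + b)"
    and Pmult: "\<And>a b. P a \<Longrightarrow> P b \<Longrightarrow> P (a * b)"
    and p: "prime p"
  shows "finite K \<Longrightarrow> (\<And>g. g \<in> K \<Longrightarrow> P (t g)) \<Longrightarrow>
     \<exists>z. P z \<and> (\<Sum>g\<in>K. t g) ^ p = (\<Sum>g\<in>K. t g ^ p) + of_nat p * z"
proof (induction K rule: finite_induct)
  case empty
  have "p > 0" using p prime_gt_0_nat by blast
  then show ?case using P0 by (intro exI[of _ 0]) (simp add: zero_power)
next
  case (insert g K)
  obtain z1 where z1: "P z1" "(\<Sum>g\<in>K. t g) ^ p = (\<Sum>g\<in>K. t g ^ p) + of_nat p * z1"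
    using insert by blast
  have Psum': "P (sum t A)" if "\<And>g. g \<in> A \<Longrightarrow> P (t g)" for A
    using that by (induction A rule: infinite_finite_induct) (simp_all add: P0 Padd)
  have Psum: "P (sum t K)" using insert.prems by (intro Psum') auto
  obtain z2 where z2: "P z2" "(t g + sum t K) ^ p = t g ^ p + sum t K ^ p + of_nat p * z2"
    using frob2[OF P0 P1 Padd Pmult _ Psum p, of "t g"] insert.prems by blast
  have "(\<Sum>g\<in>insert g K. t g) ^ p = (\<Sum>g\<in>insert g K. t g ^ p) + of_nat p * (z1 + z2)"
    using insert.hyps z1(2) z2(2) by (simp add: algebra_simps)
  moreover have "P (z1 + z2)" using z1(1) z2(1) by (rule Padd)
  ultimately show ?case by blast
qed

definition coef_in :: "complex set \<Rightarrow> mpoly \<Rightarrow> bool" where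
  "coef_in R q \<longleftrightarrow> (\<forall>k. Poly_Mapping.lookup q k \<in> R)"

lemma pm_decomp:
  fixes q :: "('a \<Rightarrow>\<^sub>0 nat) \<Rightarrow>\<^sub>0 complex"
  shows "q = (\<Sum>b\<in>Poly_Mapping.keys q. Poly_Mapping.single b (Poly_Mapping.lookup q b))"
proof (rule poly_mapping_eqI)
  fix k
  show "Poly_Mapping.lookup q k = Poly_Mapping.lookup (\<Sum>b\<in>Poly_Mapping.keys q. Poly_Mapping.single b (Poly_Mapping.lookup q b)) k"
  proof (cases "k \<in> Poly_Mapping.keys q")
    case True
    then show ?thesis
      by (simp add: lookup_sum lookup_single when_def sum.delta)
  next
    case False
    then show ?thesis
      by (simp add: lookup_sum lookup_single when_def sum.delta in_keys_iff)
  qed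
qed

lemma coef_in_0: "coef_in (zring S) 0" by (simp add: coef_in_def zr_0)
lemma coef_in_add: "coef_in (zring S) q \<Longrightarrow> coef_in (zring S) r \<Longrightarrow> coef_in (zring S) (q + r)"
  unfolding coef_in_def by (simp add: lookup_add zring.zr_add)
lemma coef_in_single: "c \<in> zring S \<Longrightarrow> coef_in (zring S) (Poly_Mapping.single b c)"
  unfolding coef_in_def by (simp add: lookup_single when_def zr_0)
lemma coef_in_sum: "(\<And>i. i \<in> A \<Longrightarrow> coef_in (zring S) (g i)) \<Longrightarrow> coef_in (zring S) (sum g A)"
  by (induction A rule: infinite_finite_induct) (simp_all add: coef_in_0 coef_in_add)
lemma coef_in_1: "coef_in (zring S) 1"
  using coef_in_single[OF zr_1, of S 0] by simp
lemma coef_in_mult: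
  assumes "coef_in (zring S) q" "coef_in (zring S) r"
  shows "coef_in (zring S) (q * r)"
proof -
  have "q * r = (\<Sum>b\<in>Poly_Mapping.keys q. Poly_Mapping.single b (Poly_Mapping.lookup q b)) *
                (\<Sum>c\<in>Poly_Mapping.keys r. Poly_Mapping.single c (Poly_Mapping.lookup r c))"
    by (simp only: pm_decomp[symmetric])
  also have "\<dots> = (\<Sum>c\<in>Poly_Mapping.keys r. \<Sum>b\<in>Poly_Mapping.keys q.
      Poly_Mapping.single (b + c) (Poly_Mapping.lookup q b * Poly_Mapping.lookup r c))"
    by (simp add: sum_distrib_left sum_distrib_right mult_single)
  finally show ?thesis using assms unfolding coef_in_def[of _ q] coef_in_def[of _ r]
    by (auto intro!: coef_in_sum coef_in_single zring.zr_mult)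
qed

definition Lw :: "((nat \<Rightarrow>\<^sub>0 nat) \<Rightarrow> nat) \<Rightarrow> mpoly \<Rightarrow> complex" where
  "Lw wt q = (\<Sum>a\<in>Poly_Mapping.keys q. Poly_Mapping.lookup q a * of_nat (wt a))"

lemma Lw_superset:
  assumes "finite A" "Poly_Mapping.keys q \<subseteq> A"
  shows "Lw wt q = (\<Sum>a\<in>A. Poly_Mapping.lookup q a * of_nat (wt a))"
  unfolding Lw_def
  by (rule sum.mono_neutral_left[OF assms(1,2)]) (simp add: in_keys_iff)

lemma Lw_add: "Lw wt (q + r) = Lw wt q + Lw wt r"
proof -
  let ?A = "Poly_Mapping.keys q \<union> Poly_Mapping.keys r"
  have f: "finite ?A" by simp
  have "Lw wt (q + r) = (\<Sum>a\<in>?A. Poly_Mapping.lookup (q + r) a * of_nat (wt a))"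
    by (rule Lw_superset[OF f]) (rule keys_add)
  also have "\<dots> = (\<Sum>a\<in>?A. Poly_Mapping.lookup q a * of_nat (wt a)) + (\<Sum>a\<in>?A. Poly_Mapping.lookup r a * of_nat (wt a))"
    by (simp add: lookup_add algebra_simps sum.distrib)
  also have "\<dots> = Lw wt q + Lw wt r"
    by (simp add: Lw_superset[OF f, symmetric])
  finally show ?thesis .
qed

lemma Lw_zero: "Lw wt 0 = 0" by (simp add: Lw_def)

lemma Lw_sum: "Lw wt (sum g A) = (\<Sum>i\<in>A. Lw wt (g i))"
  by (induction A rule: infinite_finite_induct) (simp_all add: Lw_zero Lw_add)

lemma Lw_single: "Lw wt (Poly_Mapping.single b c) = c * of_nat (wt b)"
  by (simp add: Lw_def)

lemma Lw_of_nat_mult: "Lw wt (of_nat m * q) = of_nat m * Lw wt q"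
proof (induction m)
  case 0 then show ?case by (simp add: Lw_zero)
next
  case (Suc m)
  have "(of_nat (Suc m) :: mpoly) * q = q + of_nat m * q" by (simp add: algebra_simps)
  then show ?case using Suc by (simp add: Lw_add algebra_simps)
qed

lemma Lw_in: "coef_in (zring S) q \<Longrightarrow> Lw wt q \<in> zring S"
  unfolding Lw_def coef_in_def by (intro zr_sum zring.zr_mult zr_nat) auto

lemma Lw_shift:
  "Lw wt (Poly_Mapping.single d 1 * X) =
     (\<Sum>b\<in>Poly_Mapping.keys X. Poly_Mapping.lookup X b * of_nat (wt (d + b)))"
proof -
  have "Poly_Mapping.single d 1 * X =
      Poly_Mapping.single d 1 * (\<Sum>b\<in>Poly_Mapping.keys X. Poly_Mapping.single b (Poly_Mapping.lookup X b))"
    by (simp only: pm_decomp[symmetric])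
  also have "\<dots> = (\<Sum>b\<in>Poly_Mapping.keys X. Poly_Mapping.single (d + b) (Poly_Mapping.lookup X b))"
    by (simp add: sum_distrib_left mult_single)
  finally show ?thesis by (simp add: Lw_sum Lw_single)
qed

lemma LL_Lw: "LL n = Lw (\<lambda>a. \<Prod>i<n. fact (Poly_Mapping.lookup a i))"
  by (simp add: fun_eq_iff LL_def Lw_def)

lemma lookup_sm: "Poly_Mapping.lookup (\<Sum>i<(m::nat). (g :: nat \<Rightarrow>\<^sub>0 nat)) k = m * Poly_Mapping.lookup g k"
proof -
  have "Poly_Mapping.lookup (\<Sum>i<m. g) k = (\<Sum>i<m. Poly_Mapping.lookup g k)" by (simp only: lookup_sum)
  also have "\<dots> = m * Poly_Mapping.lookup g k" by (induction m) simp_all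
  finally show ?thesis .
qed

lemma single_pow: "(Poly_Mapping.single g a :: mpoly) ^ m = Poly_Mapping.single (\<Sum>i<m. g) (a ^ m)"
proof (induction m)
  case 0 then show ?case by simp
next
  case (Suc m)
  have "(Poly_Mapping.single g a :: mpoly) ^ Suc m = Poly_Mapping.single g a * Poly_Mapping.single (\<Sum>i<m. g) (a ^ m)"
    using Suc by simp
  also have "\<dots> = Poly_Mapping.single (g + (\<Sum>i<m. g)) (a * a ^ m)" by (rule mult_single)
  also have "g + (\<Sum>i<m. g) = (\<Sum>i<Suc m. g)" by (simp only: sum.lessThan_Suc add.commute)
  finally show ?case by simp
qed

definition RR :: "nat \<Rightarrow> (nat \<Rightarrow>\<^sub>0 nat) \<Rightarrow> (nat \<Rightarrow>\<^sub>0 nat) \<Rightarrow> nat" where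
  "RR n d b = (\<Prod>i<n. fact (Poly_Mapping.lookup d i + Poly_Mapping.lookup b i) div fact (Poly_Mapping.lookup d i))"

lemma W_split:
  "(\<Prod>i<n. fact (Poly_Mapping.lookup (d + b) i) :: nat) = (\<Prod>i<n. fact (Poly_Mapping.lookup d i)) * RR n d b"
proof -
  have "(\<Prod>i<n. fact (Poly_Mapping.lookup (d + b) i) :: nat) =
      (\<Prod>i<n. fact (Poly_Mapping.lookup d i) * (fact (Poly_Mapping.lookup d i + Poly_Mapping.lookup b i) div fact (Poly_Mapping.lookup d i)))"
  proof (rule prod.cong[OF refl])
    fix i
    have "(fact (Poly_Mapping.lookup d i) :: nat) dvd fact (Poly_Mapping.lookup d i + Poly_Mapping.lookup b i)"
      by (rule fact_dvd) simp
    then show "(fact (Poly_Mapping.lookup (d + b) i) :: nat) =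
        fact (Poly_Mapping.lookup d i) * (fact (Poly_Mapping.lookup d i + Poly_Mapping.lookup b i) div fact (Poly_Mapping.lookup d i))"
      by (simp add: lookup_add)
  qed
  also have "\<dots> = (\<Prod>i<n. fact (Poly_Mapping.lookup d i)) * RR n d b"
    by (simp add: RR_def prod.distrib)
  finally show ?thesis .
qed

lemma RR_zero: "RR n d 0 = 1"
  by (simp add: RR_def)

lemma fact_p_dvd:
  assumes "(p::nat) > 0" "b \<ge> 1"
  shows "p dvd (fact (p * a + p * b) div fact (p * a))"
proof -
  let ?x = "p * a"
  have "fact (?x + p) = of_nat (?x + p) * (fact (?x + p - 1) :: nat)"
    by (rule fact_reduce) (use assms(1) in simp)
  then have f1: "fact (?x + p) = (fact (?x + p - 1) :: nat) * (?x + p)" by (simp only: of_nat_id mult.commute)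
  have f2: "(fact ?x :: nat) dvd fact (?x + p - 1)" by (rule fact_dvd) (use assms(1) in simp)
  have f3: "p dvd ?x + p" by simp
  have "fact ?x * p dvd (fact (?x + p - 1) :: nat) * (?x + p)" by (rule mult_dvd_mono[OF f2 f3])
  then have "fact ?x * p dvd (fact (?x + p) :: nat)" by (simp only: f1)
  moreover have "(fact (?x + p) :: nat) dvd fact (?x + p * b)"
    by (rule fact_dvd) (use assms(2) in simp)
  ultimately have d1: "fact ?x * p dvd (fact (?x + p * b) :: nat)" by (rule dvd_trans)
  then obtain k where k: "fact (?x + p * b) = fact ?x * p * (k :: nat)" by (rule dvdE)
  have "fact (?x + p * b) div fact ?x = p * k"
    unfolding k by (simp add: mult.assoc)
  then show ?thesis by simp
qed

lemma RR_p_dvd: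
  assumes "(p::nat) > 0" "i < n" "Poly_Mapping.lookup g i \<noteq> 0"
  shows "p dvd RR n (\<Sum>j<p. al) (\<Sum>j<p. g)"
proof -
  have "p dvd (fact (Poly_Mapping.lookup (\<Sum>j<p. al) i + Poly_Mapping.lookup (\<Sum>j<p. g) i) div fact (Poly_Mapping.lookup (\<Sum>j<p. al) i))"
    unfolding lookup_sm using fact_p_dvd[OF assms(1), of "Poly_Mapping.lookup g i" "Poly_Mapping.lookup al i"] assms(3)
    by simp
  also have "\<dots> dvd RR n (\<Sum>j<p. al) (\<Sum>j<p. g)"
    unfolding RR_def using assms(2) by (intro dvd_prodI) auto
  finally show ?thesis .
qed

theorem proposition4p7:
  fixes n :: nat and \<alpha> :: "nat \<Rightarrow>\<^sub>0 nat" and h :: mpoly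
  assumes "Poly_Mapping.keys \<alpha> \<subseteq> {..<n}"
    and "in_vars n h"
    and "Poly_Mapping.lookup h 0 \<noteq> 0"
  shows "\<exists>m\<ge>1. LL n ((monomial \<alpha> * h) ^ m) \<noteq> 0"
proof -
  define S where "S = Poly_Mapping.lookup h ` Poly_Mapping.keys h"
  define c where "c = Poly_Mapping.lookup h 0"
  have finS: "finite S" by (simp add: S_def)
  have c0: "c \<noteq> 0" using assms(3) c_def by simp
  have k0: "0 \<in> Poly_Mapping.keys h" using assms(3) by (simp add: in_keys_iff)
  have coefS: "Poly_Mapping.lookup h g \<in> zring S" if "g \<in> Poly_Mapping.keys h" for g
    unfolding S_def using that by (intro zring.zr_gen imageI)
  have cS: "c \<in> zring S" unfolding c_def by (rule coefS[OF k0])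
  obtain p where p: "prime p" "1 / of_nat p \<notin> zring (insert (1/c) S)"
    using lemA[OF finS] cS c0 by blast
  have p0: "p > 0" using p(1) prime_gt_0_nat by blast
  define t where "t g = Poly_Mapping.single g (Poly_Mapping.lookup h g)" for g
  have Pt: "coef_in (zring S) (t g)" if "g \<in> Poly_Mapping.keys h" for g
    unfolding t_def by (rule coef_in_single[OF coefS[OF that]])
  have ex: "\<exists>z. coef_in (zring S) z \<and>
      (\<Sum>g\<in>Poly_Mapping.keys h. t g) ^ p = (\<Sum>g\<in>Poly_Mapping.keys h. t g ^ p) + of_nat p * z"
    apply (rule frob_sum[where P="coef_in (zring S)"])
          apply (rule coef_in_0)
         apply (rule coef_in_1)
        apply (erule (1) coef_in_add)
       apply (erule (1) coef_in_mult)
      apply (rule p(1))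
     apply simp
    apply (erule Pt)
    done
  then obtain z where z: "coef_in (zring S) z"
      "(\<Sum>g\<in>Poly_Mapping.keys h. t g) ^ p = (\<Sum>g\<in>Poly_Mapping.keys h. t g ^ p) + of_nat p * z"
    by blast
  have hdec: "h = (\<Sum>g\<in>Poly_Mapping.keys h. t g)" unfolding t_def by (rule pm_decomp)
  define \<delta> where "\<delta> = (\<Sum>i<p. \<alpha>)"
  define W where "W a = (\<Prod>i<n. fact (Poly_Mapping.lookup a i) :: nat)" for a
  define X where "X = h ^ p"
  have fp: "(monomial \<alpha> * h) ^ p = Poly_Mapping.single \<delta> 1 * X"
    unfolding monomial_def power_mult_distrib single_pow \<delta>_def X_def by simp
  have L1: "LL n ((monomial \<alpha> * h) ^ p) = of_nat (W \<delta>) * Lw (RR n \<delta>) X"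
  proof -
    have "LL n ((monomial \<alpha> * h) ^ p) = Lw W (Poly_Mapping.single \<delta> 1 * X)"
      unfolding fp LL_Lw W_def[abs_def] ..
    also have "\<dots> = (\<Sum>b\<in>Poly_Mapping.keys X. Poly_Mapping.lookup X b * of_nat (W (\<delta> + b)))"
      by (rule Lw_shift)
    also have "\<dots> = (\<Sum>b\<in>Poly_Mapping.keys X. of_nat (W \<delta>) * (Poly_Mapping.lookup X b * of_nat (RR n \<delta> b)))"
      by (rule sum.cong[OF refl]) (simp add: W_def W_split)
    also have "\<dots> = of_nat (W \<delta>) * Lw (RR n \<delta>) X"
      by (simp add: Lw_def sum_distrib_left)
    finally show ?thesis .
  qed
  have tpow: "Lw (RR n \<delta>) (t g ^ p) = Poly_Mapping.lookup h g ^ p * of_nat (RR n \<delta> (\<Sum>i<p. g))" for g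
    by (simp only: t_def single_pow Lw_single)
  have L2: "Lw (RR n \<delta>) X = (\<Sum>g\<in>Poly_Mapping.keys h. Lw (RR n \<delta>) (t g ^ p)) + of_nat p * Lw (RR n \<delta>) z"
  proof -
    have "X = (\<Sum>g\<in>Poly_Mapping.keys h. t g ^ p) + of_nat p * z"
      unfolding X_def using z(2) hdec by simp
    then show ?thesis by (simp add: Lw_add Lw_sum Lw_of_nat_mult)
  qed
  have divp: "RR n \<delta> (\<Sum>i<p. g) = p * (RR n \<delta> (\<Sum>i<p. g) div p)"
    if "g \<in> Poly_Mapping.keys h - {0}" for g
  proof -
    have g0: "g \<noteq> 0" and gk: "g \<in> Poly_Mapping.keys h" using that by auto
    then have "Poly_Mapping.keys g \<noteq> {}" by simp
    then obtain i where i: "i \<in> Poly_Mapping.keys g" by blast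
    have "i < n" using assms(2) gk i unfolding in_vars_def by blast
    moreover have "Poly_Mapping.lookup g i \<noteq> 0" using i by (simp add: in_keys_iff)
    ultimately have "p dvd RR n \<delta> (\<Sum>i<p. g)" unfolding \<delta>_def by (intro RR_p_dvd p0)
    then show ?thesis by simp
  qed
  define G where "G = (\<Sum>g\<in>Poly_Mapping.keys h - {0}. Poly_Mapping.lookup h g ^ p * of_nat (RR n \<delta> (\<Sum>i<p. g) div p))
      + Lw (RR n \<delta>) z"
  have GS: "G \<in> zring S" unfolding G_def
    by (intro zring.zr_add zr_sum zring.zr_mult zr_pow zr_nat Lw_in z(1) coefS) auto
  have L3: "Lw (RR n \<delta>) X = c ^ p + of_nat p * G"
  proof -
    have s0: "(\<Sum>i<p. (0 :: nat \<Rightarrow>\<^sub>0 nat)) = 0" by simp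
    have "(\<Sum>g\<in>Poly_Mapping.keys h. Lw (RR n \<delta>) (t g ^ p)) =
        Lw (RR n \<delta>) (t 0 ^ p) + (\<Sum>g\<in>Poly_Mapping.keys h - {0}. Lw (RR n \<delta>) (t g ^ p))"
      using k0 by (simp add: sum.remove)
    also have "Lw (RR n \<delta>) (t 0 ^ p) = c ^ p"
      unfolding tpow s0 RR_zero c_def by simp
    also have "(\<Sum>g\<in>Poly_Mapping.keys h - {0}. Lw (RR n \<delta>) (t g ^ p)) =
        of_nat p * (\<Sum>g\<in>Poly_Mapping.keys h - {0}. Poly_Mapping.lookup h g ^ p * of_nat (RR n \<delta> (\<Sum>i<p. g) div p))"
      unfolding sum_distrib_left
    proof (rule sum.cong[OF refl])
      fix g assume g: "g \<in> Poly_Mapping.keys h - {0}"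
      have "Lw (RR n \<delta>) (t g ^ p) = Poly_Mapping.lookup h g ^ p * of_nat (p * (RR n \<delta> (\<Sum>i<p. g) div p))"
        unfolding tpow using divp[OF g] by metis
      also have "\<dots> = of_nat p * (Poly_Mapping.lookup h g ^ p * of_nat (RR n \<delta> (\<Sum>i<p. g) div p))"
        by (simp only: of_nat_mult mult.assoc mult.left_commute)
      finally show "Lw (RR n \<delta>) (t g ^ p) = of_nat p * (Poly_Mapping.lookup h g ^ p * of_nat (RR n \<delta> (\<Sum>i<p. g) div p))" .
    qed
    finally show ?thesis using L2 by (simp add: G_def algebra_simps)
  qed
  have Wnz: "(of_nat (W \<delta>) :: complex) \<noteq> 0" by (simp add: W_def)
  have "LL n ((monomial \<alpha> * h) ^ p) \<noteq> 0"
  proof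
    assume "LL n ((monomial \<alpha> * h) ^ p) = 0"
    then have e: "c ^ p + of_nat p * G = 0" using L1 L3 Wnz by simp
    have pnz: "(of_nat p :: complex) \<noteq> 0" using p0 by simp
    have "1 / of_nat p = - G * (1 / c) ^ p"
    proof -
      have "of_nat p * G = - (c ^ p)" using e by (simp add: eq_neg_iff_add_eq_0 add.commute)
      then show ?thesis using pnz c0 by (simp add: field_simps power_one_over)
    qed
    moreover have "- G * (1 / c) ^ p \<in> zring (insert (1/c) S)"
    proof -
      have "G \<in> zring (insert (1/c) S)" using GS zr_mono[of S "insert (1/c) S"] by auto
      moreover have "1 / c \<in> zring (insert (1/c) S)" by (simp add: zring.zr_gen)
      ultimately show ?thesis by (intro zring.zr_mult zr_minus zr_pow)
    qed
    ultimately show False using p(2) by simp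
  qed
  then show ?thesis using p0 by (intro exI[of _ p]) simp
qed

end
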